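(* Let $R$ be a unital ring, $e\in R$ an idempotent and $\alpha:R\to eRe$ a ring isomorphism. If $e$ is a full idempotent, i.e. $ReR=R$, then the corner skew Laurent polynomial ring $R[t_+,t_-;\alpha]$ is strongly $\mathbb{Z}$-graded.
   Context: $R[t_+,t_-;\alpha]$ is the universal unital ring equipped with a unital ring homomorphism $i:R\to R[t_+,t_-;\alpha]$ and elements $t_+,t_-$ satisfying $t_-t_+=1$, $t_+t_-=i(e)$, $i(r)t_-=t_-i(\alpha(r))$ and $t_+i(r)=i(\alpha(r))t_+$ for all $r\in R$. It is $\mathbb{Z}$-graded by $A_0=i(R)$, $A_i=Rt_+^{-i}$ for $i<0$ and $A_i=t_-^iR$ for $i>0$ (so $t_-\in A_1$, $t_+\in A_{-1}$). A $\mathbb{Z}$-graded ring is strongly graded if $A_mA_n=A_{m+n}$ for all $m,n$. *)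

theory Defs
  imports "HOL-Algebra.Algebra"
begin

definition corner :: "('a, 'm) ring_scheme \<Rightarrow> 'a \<Rightarrow> ('a, 'm) ring_scheme" where
  "corner R e = R\<lparr>carrier := {e \<otimes>\<^bsub>R\<^esub> r \<otimes>\<^bsub>R\<^esub> e | r. r \<in> carrier R}, one := e\<rparr>"

definition add_span :: "('a, 'm) ring_scheme \<Rightarrow> 'a set \<Rightarrow> 'a set" where
  "add_span R S = \<Inter>{H. additive_subgroup H R \<and> S \<subseteq> H}"

definition set_prod :: "('a, 'm) ring_scheme \<Rightarrow> 'a set \<Rightarrow> 'a set \<Rightarrow> 'a set" where
  "set_prod R S T = add_span R {x \<otimes>\<^bsub>R\<^esub> y | x y. x \<in> S \<and> y \<in> T}"

definition idempotent_elem :: "('a, 'm) ring_scheme \<Rightarrow> 'a \<Rightarrow> bool" where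
  "idempotent_elem R e \<longleftrightarrow> e \<in> carrier R \<and> e \<otimes>\<^bsub>R\<^esub> e = e"

definition full_idempotent :: "('a, 'm) ring_scheme \<Rightarrow> 'a \<Rightarrow> bool" where
  "full_idempotent R e \<longleftrightarrow> idempotent_elem R e \<and>
     set_prod R (set_prod R (carrier R) {e}) (carrier R) = carrier R"

text \<open>The defining relations of the corner skew Laurent polynomial ring, in a ring B
  with a unital ring homomorphism j : R -> B and elements sp (= t_+), sm (= t_-).\<close>
definition corner_skew_rels ::
  "('a, 'm) ring_scheme \<Rightarrow> 'a \<Rightarrow> ('a \<Rightarrow> 'a) \<Rightarrow> ('b, 'n) ring_scheme \<Rightarrow> ('a \<Rightarrow> 'b) \<Rightarrow> 'b \<Rightarrow> 'b \<Rightarrow> bool" where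
  "corner_skew_rels R e \<alpha> B j sp sm \<longleftrightarrow>
     ring B \<and> j \<in> ring_hom R B \<and> sp \<in> carrier B \<and> sm \<in> carrier B \<and>
     sm \<otimes>\<^bsub>B\<^esub> sp = \<one>\<^bsub>B\<^esub> \<and> sp \<otimes>\<^bsub>B\<^esub> sm = j e \<and>
     (\<forall>r\<in>carrier R. j r \<otimes>\<^bsub>B\<^esub> sm = sm \<otimes>\<^bsub>B\<^esub> j (\<alpha> r)) \<and>
     (\<forall>r\<in>carrier R. sp \<otimes>\<^bsub>B\<^esub> j r = j (\<alpha> r) \<otimes>\<^bsub>B\<^esub> sp)"

text \<open>(A, i, tp, tm) is the universal such ring R[t_+,t_-;alpha] (universality tested
  against all rings whose elements live in the same type as those of A).\<close>
definition is_corner_skew_Laurent ::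
  "('a, 'm) ring_scheme \<Rightarrow> 'a \<Rightarrow> ('a \<Rightarrow> 'a) \<Rightarrow> 'b ring \<Rightarrow> ('a \<Rightarrow> 'b) \<Rightarrow> 'b \<Rightarrow> 'b \<Rightarrow> bool" where
  "is_corner_skew_Laurent R e \<alpha> A i tp tm \<longleftrightarrow>
     corner_skew_rels R e \<alpha> A i tp tm \<and>
     (\<forall>(B::'b ring) j sp sm. corner_skew_rels R e \<alpha> B j sp sm \<longrightarrow>
        (\<exists>\<phi>\<in>ring_hom A B. (\<forall>r\<in>carrier R. \<phi> (i r) = j r) \<and> \<phi> tp = sp \<and> \<phi> tm = sm \<and>
           (\<forall>\<psi>\<in>ring_hom A B. (\<forall>r\<in>carrier R. \<psi> (i r) = j r) \<and> \<psi> tp = sp \<and> \<psi> tm = sm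
               \<longrightarrow> (\<forall>x\<in>carrier A. \<psi> x = \<phi> x))))"

definition cs_grade ::
  "('a, 'm) ring_scheme \<Rightarrow> 'b ring \<Rightarrow> ('a \<Rightarrow> 'b) \<Rightarrow> 'b \<Rightarrow> 'b \<Rightarrow> int \<Rightarrow> 'b set" where
  "cs_grade R A i tp tm n =
     (if n = 0 then i ` carrier R
      else if n < 0 then {i r \<otimes>\<^bsub>A\<^esub> (tp [^]\<^bsub>A\<^esub> nat (- n)) | r. r \<in> carrier R}
      else {(tm [^]\<^bsub>A\<^esub> nat n) \<otimes>\<^bsub>A\<^esub> i r | r. r \<in> carrier R})"

definition strongly_graded :: "'b ring \<Rightarrow> (int \<Rightarrow> 'b set) \<Rightarrow> bool" where
  "strongly_graded A G \<longleftrightarrow> (\<forall>m n. set_prod A (G m) (G n) = G (m + n))"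

end

theory Submission
  imports Defs
begin



lemma (in ring) add_subgroupI':
  assumes "H \<subseteq> carrier R" "\<zero> \<in> H" "\<And>x y. x \<in> H \<Longrightarrow> y \<in> H \<Longrightarrow> x \<oplus> y \<in> H"
    "\<And>x. x \<in> H \<Longrightarrow> \<ominus> x \<in> H"
  shows "additive_subgroup H R"
  apply (rule additive_subgroupI, rule subgroup.intro)
  using assms by (auto simp: a_inv_def[symmetric])

lemma span_sub:
  assumes "ring R" "S \<subseteq> carrier R"
  shows "additive_subgroup (add_span R S) R"
proof -
  interpret ring R by fact
  have c: "additive_subgroup (carrier R) R"
    by (rule add_subgroupI') auto
  show ?thesis
    unfolding add_span_def
  proof (rule add_subgroupI')
    show "\<Inter> {H. additive_subgroup H R \<and> S \<subseteq> H} \<subseteq> carrier R" using c assms by auto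
  qed (auto intro: additive_subgroup.a_closed additive_subgroup.a_inv_closed additive_subgroup.zero_closed)
qed

lemma span_incl: "S \<subseteq> carrier R \<Longrightarrow> ring R \<Longrightarrow> S \<subseteq> add_span R S"
  unfolding add_span_def by auto

lemma span_min: "additive_subgroup H R \<Longrightarrow> S \<subseteq> H \<Longrightarrow> add_span R S \<subseteq> H"
  unfolding add_span_def by auto

lemma span_carrier: "ring R \<Longrightarrow> S \<subseteq> carrier R \<Longrightarrow> add_span R S \<subseteq> carrier R"
  using span_sub additive_subgroup.a_subset by blast

lemma span_induct:
  assumes R: "ring R" and S: "S \<subseteq> carrier R" and x: "x \<in> add_span R S"
    and gen: "\<And>s. s \<in> S \<Longrightarrow> P s" and z: "P \<zero>\<^bsub>R\<^esub>"
    and a: "\<And>u v. u \<in> carrier R \<Longrightarrow> v \<in> carrier R \<Longrightarrow> P u \<Longrightarrow> P v \<Longrightarrow> P (u \<oplus>\<^bsub>R\<^esub> v)"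
    and n: "\<And>u. u \<in> carrier R \<Longrightarrow> P u \<Longrightarrow> P (\<ominus>\<^bsub>R\<^esub> u)"
  shows "P x"
proof -
  interpret ring R by fact
  have "additive_subgroup {u \<in> carrier R. P u} R"
    by (rule add_subgroupI') (auto simp: z a n)
  moreover have "S \<subseteq> {u \<in> carrier R. P u}" using S gen by auto
  ultimately show ?thesis using span_min x by blast
qed




lemma addhom_zero:
  assumes R: "ring R" and S: "ring S" and c: "\<And>x. x \<in> carrier R \<Longrightarrow> h x \<in> carrier S"
    and a: "\<And>x y. x \<in> carrier R \<Longrightarrow> y \<in> carrier R \<Longrightarrow> h (x \<oplus>\<^bsub>R\<^esub> y) = h x \<oplus>\<^bsub>S\<^esub> h y"
  shows "h \<zero>\<^bsub>R\<^esub> = \<zero>\<^bsub>S\<^esub>"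
proof -
  interpret R: ring R by fact
  interpret S: ring S by fact
  have "h \<zero>\<^bsub>R\<^esub> \<oplus>\<^bsub>S\<^esub> h \<zero>\<^bsub>R\<^esub> = h \<zero>\<^bsub>R\<^esub> \<oplus>\<^bsub>S\<^esub> \<zero>\<^bsub>S\<^esub>"
    using a[of "\<zero>\<^bsub>R\<^esub>" "\<zero>\<^bsub>R\<^esub>"] c by simp
  then show ?thesis using c by (simp del: S.r_zero)
qed

lemma addhom_neg:
  assumes R: "ring R" and S: "ring S" and c: "\<And>x. x \<in> carrier R \<Longrightarrow> h x \<in> carrier S"
    and a: "\<And>x y. x \<in> carrier R \<Longrightarrow> y \<in> carrier R \<Longrightarrow> h (x \<oplus>\<^bsub>R\<^esub> y) = h x \<oplus>\<^bsub>S\<^esub> h y"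
    and x: "x \<in> carrier R"
  shows "h (\<ominus>\<^bsub>R\<^esub> x) = \<ominus>\<^bsub>S\<^esub> h x"
proof -
  interpret R: ring R by fact
  interpret S: ring S by fact
  have z: "h \<zero>\<^bsub>R\<^esub> = \<zero>\<^bsub>S\<^esub>" by (rule addhom_zero[OF R S c a])
  have "h x \<oplus>\<^bsub>S\<^esub> h (\<ominus>\<^bsub>R\<^esub> x) = h x \<oplus>\<^bsub>S\<^esub> (\<ominus>\<^bsub>S\<^esub> h x)"
    using a[of x "\<ominus>\<^bsub>R\<^esub> x"] x z c by (simp add: R.r_neg S.r_neg)
  then show ?thesis using x c by simp
qed

locale cs = R: ring R + A: ring A for R :: "'a ring" and A :: "'b ring" +
  fixes e :: 'a and \<alpha> :: "'a \<Rightarrow> 'a" and i :: "'a \<Rightarrow> 'b" and tp tm :: 'b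
  assumes e: "e \<in> carrier R" and ee: "e \<otimes>\<^bsub>R\<^esub> e = e"
    and ahom: "\<alpha> \<in> ring_hom R (corner R e)"
    and asurj: "\<alpha> ` carrier R = carrier (corner R e)"
    and ihom: "i \<in> ring_hom R A"
    and tp: "tp \<in> carrier A" and tm: "tm \<in> carrier A"
    and r1: "tm \<otimes>\<^bsub>A\<^esub> tp = \<one>\<^bsub>A\<^esub>" and r2: "tp \<otimes>\<^bsub>A\<^esub> tm = i e"
    and r3: "\<And>r. r \<in> carrier R \<Longrightarrow> i r \<otimes>\<^bsub>A\<^esub> tm = tm \<otimes>\<^bsub>A\<^esub> i (\<alpha> r)"
    and r4: "\<And>r. r \<in> carrier R \<Longrightarrow> tp \<otimes>\<^bsub>A\<^esub> i r = i (\<alpha> r) \<otimes>\<^bsub>A\<^esub> tp"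
    and full: "\<one>\<^bsub>R\<^esub> \<in> add_span R {x \<otimes>\<^bsub>R\<^esub> e \<otimes>\<^bsub>R\<^esub> y | x y. x \<in> carrier R \<and> y \<in> carrier R}"
begin

lemma acar_c: "r \<in> carrier R \<Longrightarrow> \<alpha> r \<in> carrier (corner R e)"
  using ring_hom_closed[OF ahom] by blast

lemma acar[simp]: "r \<in> carrier R \<Longrightarrow> \<alpha> r \<in> carrier R"
  using acar_c[of r] e by (auto simp: corner_def)

lemma amul: "r \<in> carrier R \<Longrightarrow> s \<in> carrier R \<Longrightarrow> \<alpha> (r \<otimes>\<^bsub>R\<^esub> s) = \<alpha> r \<otimes>\<^bsub>R\<^esub> \<alpha> s"
  using ring_hom_mult[OF ahom] by (simp add: corner_def)

lemma aadd: "r \<in> carrier R \<Longrightarrow> s \<in> carrier R \<Longrightarrow> \<alpha> (r \<oplus>\<^bsub>R\<^esub> s) = \<alpha> r \<oplus>\<^bsub>R\<^esub> \<alpha> s"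
  using ring_hom_add[OF ahom] by (simp add: corner_def)

lemma aone: "\<alpha> \<one>\<^bsub>R\<^esub> = e"
  using ring_hom_one[OF ahom] by (simp add: corner_def)

lemma azero: "\<alpha> \<zero>\<^bsub>R\<^esub> = \<zero>\<^bsub>R\<^esub>"
  by (rule addhom_zero[OF R.ring_axioms R.ring_axioms acar aadd])

lemma aneg: "r \<in> carrier R \<Longrightarrow> \<alpha> (\<ominus>\<^bsub>R\<^esub> r) = \<ominus>\<^bsub>R\<^esub> \<alpha> r"
  by (rule addhom_neg[OF R.ring_axioms R.ring_axioms acar aadd])

lemma a_e: "r \<in> carrier R \<Longrightarrow> \<alpha> r \<otimes>\<^bsub>R\<^esub> e = \<alpha> r"
proof -
  assume r: "r \<in> carrier R"
  then obtain s where s: "s \<in> carrier R" "\<alpha> r = e \<otimes>\<^bsub>R\<^esub> s \<otimes>\<^bsub>R\<^esub> e"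
    using acar_c[of r] by (auto simp: corner_def)
  then show ?thesis using e ee by (simp add: R.m_assoc)
qed

lemma asurj': "r \<in> carrier R \<Longrightarrow> \<exists>s\<in>carrier R. \<alpha> s = e \<otimes>\<^bsub>R\<^esub> r \<otimes>\<^bsub>R\<^esub> e"
proof -
  assume r: "r \<in> carrier R"
  then have "e \<otimes>\<^bsub>R\<^esub> r \<otimes>\<^bsub>R\<^esub> e \<in> carrier (corner R e)" by (auto simp: corner_def)
  then show ?thesis using asurj by (metis imageE)
qed

lemma icar[simp]: "r \<in> carrier R \<Longrightarrow> i r \<in> carrier A"
  using ring_hom_closed[OF ihom] by blast

lemma imul: "r \<in> carrier R \<Longrightarrow> s \<in> carrier R \<Longrightarrow> i (r \<otimes>\<^bsub>R\<^esub> s) = i r \<otimes>\<^bsub>A\<^esub> i s"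
  using ring_hom_mult[OF ihom] by simp

lemma iadd: "r \<in> carrier R \<Longrightarrow> s \<in> carrier R \<Longrightarrow> i (r \<oplus>\<^bsub>R\<^esub> s) = i r \<oplus>\<^bsub>A\<^esub> i s"
  using ring_hom_add[OF ihom] by simp

lemma ione: "i \<one>\<^bsub>R\<^esub> = \<one>\<^bsub>A\<^esub>"
  using ring_hom_one[OF ihom] by simp

lemma izero: "i \<zero>\<^bsub>R\<^esub> = \<zero>\<^bsub>A\<^esub>"
  by (rule addhom_zero[OF R.ring_axioms A.ring_axioms icar iadd])

lemma ineg: "r \<in> carrier R \<Longrightarrow> i (\<ominus>\<^bsub>R\<^esub> r) = \<ominus>\<^bsub>A\<^esub> i r"
  by (rule addhom_neg[OF R.ring_axioms A.ring_axioms icar iadd])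

lemma tm_e: "tm \<otimes>\<^bsub>A\<^esub> i e = tm"
  by (metis r1 r2 A.m_assoc A.l_one A.r_one tm tp)

lemma e_tp: "i e \<otimes>\<^bsub>A\<^esub> tp = tp"
  by (metis r1 r2 A.m_assoc A.l_one A.r_one tm tp)

lemma pcomm: "x \<in> carrier A \<Longrightarrow> x \<otimes>\<^bsub>A\<^esub> x [^]\<^bsub>A\<^esub> (n::nat) = x [^]\<^bsub>A\<^esub> n \<otimes>\<^bsub>A\<^esub> x"
  by (metis A.nat_pow_Suc2 nat_pow_Suc)

lemma pcomm2: "x \<in> carrier A \<Longrightarrow> z \<in> carrier A \<Longrightarrow> x \<otimes>\<^bsub>A\<^esub> (x [^]\<^bsub>A\<^esub> (n::nat) \<otimes>\<^bsub>A\<^esub> z) = x [^]\<^bsub>A\<^esub> n \<otimes>\<^bsub>A\<^esub> (x \<otimes>\<^bsub>A\<^esub> z)"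
  by (metis pcomm A.m_assoc A.nat_pow_closed)

lemma apow_car[simp]: "r \<in> carrier R \<Longrightarrow> (\<alpha> ^^ n) r \<in> carrier R"
  by (induct n) auto

lemma L1: "r \<in> carrier R \<Longrightarrow> i r \<otimes>\<^bsub>A\<^esub> tm [^]\<^bsub>A\<^esub> n = tm [^]\<^bsub>A\<^esub> n \<otimes>\<^bsub>A\<^esub> i ((\<alpha> ^^ n) r)"
proof (induct n arbitrary: r)
  case 0 then show ?case by simp
next
  case (Suc n)
  have "i r \<otimes>\<^bsub>A\<^esub> tm [^]\<^bsub>A\<^esub> Suc n = (i r \<otimes>\<^bsub>A\<^esub> tm) \<otimes>\<^bsub>A\<^esub> tm [^]\<^bsub>A\<^esub> n"
    using Suc tm by (simp only: A.nat_pow_Suc2[OF tm] A.m_assoc icar A.nat_pow_closed)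
  also have "\<dots> = tm \<otimes>\<^bsub>A\<^esub> (i (\<alpha> r) \<otimes>\<^bsub>A\<^esub> tm [^]\<^bsub>A\<^esub> n)"
    using Suc tm by (simp add: r3 A.m_assoc)
  also have "\<dots> = tm [^]\<^bsub>A\<^esub> Suc n \<otimes>\<^bsub>A\<^esub> i ((\<alpha> ^^ Suc n) r)"
    using Suc tm by (simp add: A.m_assoc funpow_swap1 pcomm pcomm2)
  finally show ?case .
qed

lemma L2: "r \<in> carrier R \<Longrightarrow> tp [^]\<^bsub>A\<^esub> n \<otimes>\<^bsub>A\<^esub> i r = i ((\<alpha> ^^ n) r) \<otimes>\<^bsub>A\<^esub> tp [^]\<^bsub>A\<^esub> n"
proof (induct n arbitrary: r)
  case 0 then show ?case by simp
next
  case (Suc n)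
  have "tp [^]\<^bsub>A\<^esub> Suc n \<otimes>\<^bsub>A\<^esub> i r = tp [^]\<^bsub>A\<^esub> n \<otimes>\<^bsub>A\<^esub> (tp \<otimes>\<^bsub>A\<^esub> i r)"
    using Suc.prems tp by (simp add: A.m_assoc)
  also have "\<dots> = (tp [^]\<^bsub>A\<^esub> n \<otimes>\<^bsub>A\<^esub> i (\<alpha> r)) \<otimes>\<^bsub>A\<^esub> tp"
    using Suc.prems tp by (simp add: r4 A.m_assoc)
  also have "\<dots> = i ((\<alpha> ^^ n) (\<alpha> r)) \<otimes>\<^bsub>A\<^esub> tp [^]\<^bsub>A\<^esub> n \<otimes>\<^bsub>A\<^esub> tp"
    using Suc.prems Suc.hyps[of "\<alpha> r"] by simp
  also have "\<dots> = i ((\<alpha> ^^ Suc n) r) \<otimes>\<^bsub>A\<^esub> tp [^]\<^bsub>A\<^esub> Suc n"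
    using Suc.prems tp by (simp add: A.m_assoc funpow_swap1)
  finally show ?case .
qed

lemma L3: "tm [^]\<^bsub>A\<^esub> (n::nat) \<otimes>\<^bsub>A\<^esub> tp [^]\<^bsub>A\<^esub> n = \<one>\<^bsub>A\<^esub>"
proof (induct n)
  case 0 then show ?case by simp
next
  case (Suc n)
  have "tm [^]\<^bsub>A\<^esub> Suc n \<otimes>\<^bsub>A\<^esub> tp [^]\<^bsub>A\<^esub> Suc n
      = tm [^]\<^bsub>A\<^esub> n \<otimes>\<^bsub>A\<^esub> (tm \<otimes>\<^bsub>A\<^esub> tp) \<otimes>\<^bsub>A\<^esub> tp [^]\<^bsub>A\<^esub> n"
    using tm tp by (simp add: A.m_assoc pcomm pcomm2)
  also have "\<dots> = \<one>\<^bsub>A\<^esub>" using Suc tm tp by (simp add: r1)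
  finally show ?case .
qed

lemma K: "r \<in> carrier R \<Longrightarrow> \<exists>s\<in>carrier R. tm [^]\<^bsub>A\<^esub> (n::nat) \<otimes>\<^bsub>A\<^esub> i r \<otimes>\<^bsub>A\<^esub> tp [^]\<^bsub>A\<^esub> n = i s"
proof (induct n arbitrary: r)
  case 0 then show ?case by auto
next
  case (Suc n)
  obtain s where s: "s \<in> carrier R" "\<alpha> s = e \<otimes>\<^bsub>R\<^esub> r \<otimes>\<^bsub>R\<^esub> e" using asurj' Suc.prems by blast
  have "tm \<otimes>\<^bsub>A\<^esub> i r \<otimes>\<^bsub>A\<^esub> tp = (tm \<otimes>\<^bsub>A\<^esub> i e) \<otimes>\<^bsub>A\<^esub> i r \<otimes>\<^bsub>A\<^esub> (i e \<otimes>\<^bsub>A\<^esub> tp)"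
    by (simp add: tm_e e_tp)
  also have "\<dots> = tm \<otimes>\<^bsub>A\<^esub> i (e \<otimes>\<^bsub>R\<^esub> r \<otimes>\<^bsub>R\<^esub> e) \<otimes>\<^bsub>A\<^esub> tp"
    using s Suc.prems e tm tp by (simp add: imul A.m_assoc)
  also have "\<dots> = tm \<otimes>\<^bsub>A\<^esub> i (\<alpha> s) \<otimes>\<^bsub>A\<^esub> tp" using s(2) by simp
  also have "\<dots> = i s"
    by (metis r3 r1 A.m_assoc A.r_one icar acar tm tp s(1))
  finally have 1: "tm \<otimes>\<^bsub>A\<^esub> i r \<otimes>\<^bsub>A\<^esub> tp = i s" .
  have "tm [^]\<^bsub>A\<^esub> Suc n \<otimes>\<^bsub>A\<^esub> i r \<otimes>\<^bsub>A\<^esub> tp [^]\<^bsub>A\<^esub> Suc n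
     = tm [^]\<^bsub>A\<^esub> n \<otimes>\<^bsub>A\<^esub> (tm \<otimes>\<^bsub>A\<^esub> i r \<otimes>\<^bsub>A\<^esub> tp) \<otimes>\<^bsub>A\<^esub> tp [^]\<^bsub>A\<^esub> n"
    using tm tp Suc.prems by (simp add: A.m_assoc pcomm pcomm2)
  also have "\<dots> = tm [^]\<^bsub>A\<^esub> n \<otimes>\<^bsub>A\<^esub> i s \<otimes>\<^bsub>A\<^esub> tp [^]\<^bsub>A\<^esub> n" by (simp add: 1)
  finally show ?case using Suc.hyps[OF s(1)] by metis
qed

end



definition Jset :: "('a, 'm) ring_scheme \<Rightarrow> 'a \<Rightarrow> 'a set" where
  "Jset R c = add_span R {x \<otimes>\<^bsub>R\<^esub> c \<otimes>\<^bsub>R\<^esub> y | x y. x \<in> carrier R \<and> y \<in> carrier R}"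

context cs begin

lemma gens_car: "c \<in> carrier R \<Longrightarrow> {x \<otimes>\<^bsub>R\<^esub> c \<otimes>\<^bsub>R\<^esub> y | x y. x \<in> carrier R \<and> y \<in> carrier R} \<subseteq> carrier R"
  by auto

lemma J_sub: "c \<in> carrier R \<Longrightarrow> additive_subgroup (Jset R c) R"
  unfolding Jset_def by (rule span_sub[OF R.ring_axioms gens_car])

lemma J_car: "c \<in> carrier R \<Longrightarrow> Jset R c \<subseteq> carrier R"
  using J_sub additive_subgroup.a_subset by blast

lemma J_gen: "c \<in> carrier R \<Longrightarrow> x \<in> carrier R \<Longrightarrow> y \<in> carrier R \<Longrightarrow> x \<otimes>\<^bsub>R\<^esub> c \<otimes>\<^bsub>R\<^esub> y \<in> Jset R c"
  unfolding Jset_def using span_incl[OF gens_car R.ring_axioms] by blast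

lemma J_ideal:
  assumes c: "c \<in> carrier R" and u: "u \<in> Jset R c"
  shows "\<forall>x\<in>carrier R. \<forall>y\<in>carrier R. x \<otimes>\<^bsub>R\<^esub> u \<otimes>\<^bsub>R\<^esub> y \<in> Jset R c"
  using R.ring_axioms gens_car[OF c] u[unfolded Jset_def]
proof (rule span_induct)
  fix s assume "s \<in> {x \<otimes>\<^bsub>R\<^esub> c \<otimes>\<^bsub>R\<^esub> y | x y. x \<in> carrier R \<and> y \<in> carrier R}"
  then obtain x' y' where s: "s = x' \<otimes>\<^bsub>R\<^esub> c \<otimes>\<^bsub>R\<^esub> y'" "x' \<in> carrier R" "y' \<in> carrier R" by blast
  show "\<forall>x\<in>carrier R. \<forall>y\<in>carrier R. x \<otimes>\<^bsub>R\<^esub> s \<otimes>\<^bsub>R\<^esub> y \<in> Jset R c"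
  proof (intro ballI)
    fix x y assume xy: "x \<in> carrier R" "y \<in> carrier R"
    have "x \<otimes>\<^bsub>R\<^esub> s \<otimes>\<^bsub>R\<^esub> y = (x \<otimes>\<^bsub>R\<^esub> x') \<otimes>\<^bsub>R\<^esub> c \<otimes>\<^bsub>R\<^esub> (y' \<otimes>\<^bsub>R\<^esub> y)"
      using s xy c by (simp add: R.m_assoc)
    then show "x \<otimes>\<^bsub>R\<^esub> s \<otimes>\<^bsub>R\<^esub> y \<in> Jset R c" using J_gen s xy c by simp
  qed
next
  show "\<forall>x\<in>carrier R. \<forall>y\<in>carrier R. x \<otimes>\<^bsub>R\<^esub> \<zero>\<^bsub>R\<^esub> \<otimes>\<^bsub>R\<^esub> y \<in> Jset R c"
    using additive_subgroup.zero_closed[OF J_sub[OF c]] by simp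
next
  fix u v assume uv: "u \<in> carrier R" "v \<in> carrier R"
    and hu: "\<forall>x\<in>carrier R. \<forall>y\<in>carrier R. x \<otimes>\<^bsub>R\<^esub> u \<otimes>\<^bsub>R\<^esub> y \<in> Jset R c"
    and hv: "\<forall>x\<in>carrier R. \<forall>y\<in>carrier R. x \<otimes>\<^bsub>R\<^esub> v \<otimes>\<^bsub>R\<^esub> y \<in> Jset R c"
  show "\<forall>x\<in>carrier R. \<forall>y\<in>carrier R. x \<otimes>\<^bsub>R\<^esub> (u \<oplus>\<^bsub>R\<^esub> v) \<otimes>\<^bsub>R\<^esub> y \<in> Jset R c"
    using hu hv uv additive_subgroup.a_closed[OF J_sub[OF c]] by (simp add: R.r_distr R.l_distr)
next
  fix u assume u: "u \<in> carrier R"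
    and hu: "\<forall>x\<in>carrier R. \<forall>y\<in>carrier R. x \<otimes>\<^bsub>R\<^esub> u \<otimes>\<^bsub>R\<^esub> y \<in> Jset R c"
  show "\<forall>x\<in>carrier R. \<forall>y\<in>carrier R. x \<otimes>\<^bsub>R\<^esub> (\<ominus>\<^bsub>R\<^esub> u) \<otimes>\<^bsub>R\<^esub> y \<in> Jset R c"
    using hu u additive_subgroup.a_inv_closed[OF J_sub[OF c]] by (simp add: R.r_minus R.l_minus)
qed

lemma J_trans: "c \<in> carrier R \<Longrightarrow> d \<in> carrier R \<Longrightarrow> d \<in> Jset R c \<Longrightarrow> Jset R d \<subseteq> Jset R c"
  unfolding Jset_def[of R d]
  by (rule span_min[OF J_sub]) (auto dest: J_ideal)

lemma J_hom:
  assumes c: "c \<in> carrier R" and u: "u \<in> Jset R c"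
  shows "\<alpha> u \<in> Jset R (\<alpha> c)"
  using R.ring_axioms gens_car[OF c] u[unfolded Jset_def]
proof (rule span_induct)
  fix s assume "s \<in> {x \<otimes>\<^bsub>R\<^esub> c \<otimes>\<^bsub>R\<^esub> y | x y. x \<in> carrier R \<and> y \<in> carrier R}"
  then obtain x' y' where s: "s = x' \<otimes>\<^bsub>R\<^esub> c \<otimes>\<^bsub>R\<^esub> y'" "x' \<in> carrier R" "y' \<in> carrier R" by blast
  then show "\<alpha> s \<in> Jset R (\<alpha> c)" using c J_gen by (simp add: amul)
next
  show "\<alpha> \<zero>\<^bsub>R\<^esub> \<in> Jset R (\<alpha> c)" using azero additive_subgroup.zero_closed[OF J_sub] c by simp
next
  fix u v assume "u \<in> carrier R" "v \<in> carrier R" "\<alpha> u \<in> Jset R (\<alpha> c)" "\<alpha> v \<in> Jset R (\<alpha> c)"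
  then show "\<alpha> (u \<oplus>\<^bsub>R\<^esub> v) \<in> Jset R (\<alpha> c)" using aadd additive_subgroup.a_closed[OF J_sub] c by simp
next
  fix u assume "u \<in> carrier R" "\<alpha> u \<in> Jset R (\<alpha> c)"
  then show "\<alpha> (\<ominus>\<^bsub>R\<^esub> u) \<in> Jset R (\<alpha> c)" using aneg additive_subgroup.a_inv_closed[OF J_sub] c by simp
qed

lemma J_e: "\<one>\<^bsub>R\<^esub> \<in> Jset R e"
  using full unfolding Jset_def .

lemma Pf: "\<exists>f\<in>carrier R. tp [^]\<^bsub>A\<^esub> (n::nat) \<otimes>\<^bsub>A\<^esub> tm [^]\<^bsub>A\<^esub> n = i f \<and> \<one>\<^bsub>R\<^esub> \<in> Jset R f"
proof (induct n)
  case 0 show ?case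
    using ione J_gen[of "\<one>\<^bsub>R\<^esub>" "\<one>\<^bsub>R\<^esub>" "\<one>\<^bsub>R\<^esub>"] by (intro bexI[of _ "\<one>\<^bsub>R\<^esub>"]) auto
next
  case (Suc n)
  then obtain f where f: "f \<in> carrier R" "tp [^]\<^bsub>A\<^esub> n \<otimes>\<^bsub>A\<^esub> tm [^]\<^bsub>A\<^esub> n = i f" "\<one>\<^bsub>R\<^esub> \<in> Jset R f" by blast
  have "tp [^]\<^bsub>A\<^esub> Suc n \<otimes>\<^bsub>A\<^esub> tm [^]\<^bsub>A\<^esub> Suc n = tp \<otimes>\<^bsub>A\<^esub> (tp [^]\<^bsub>A\<^esub> n \<otimes>\<^bsub>A\<^esub> tm [^]\<^bsub>A\<^esub> n) \<otimes>\<^bsub>A\<^esub> tm"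
    using tp tm by (simp add: A.m_assoc pcomm pcomm2)
  also have "\<dots> = tp \<otimes>\<^bsub>A\<^esub> i f \<otimes>\<^bsub>A\<^esub> tm" by (simp add: f)
  also have "\<dots> = i (\<alpha> f) \<otimes>\<^bsub>A\<^esub> (tp \<otimes>\<^bsub>A\<^esub> tm)" using f tp tm by (simp add: r4 A.m_assoc)
  also have "\<dots> = i (\<alpha> f)" using f by (simp add: r2 imul[symmetric] e a_e)
  finally have 1: "tp [^]\<^bsub>A\<^esub> Suc n \<otimes>\<^bsub>A\<^esub> tm [^]\<^bsub>A\<^esub> Suc n = i (\<alpha> f)" .
  have "e \<in> Jset R (\<alpha> f)" using J_hom[OF f(1) f(3)] aone by simp
  then have "Jset R e \<subseteq> Jset R (\<alpha> f)" using J_trans f e by simp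
  then have "\<one>\<^bsub>R\<^esub> \<in> Jset R (\<alpha> f)" using J_e by blast
  then show ?case using 1 f by auto
qed

end



context cs begin


lemma M1: assumes r: "r \<in> carrier R" and s: "s \<in> carrier R"
  shows "(tm [^]\<^bsub>A\<^esub> (b::nat) \<otimes>\<^bsub>A\<^esub> i r) \<otimes>\<^bsub>A\<^esub> (tm [^]\<^bsub>A\<^esub> (d::nat) \<otimes>\<^bsub>A\<^esub> i s)
   = tm [^]\<^bsub>A\<^esub> (b + d) \<otimes>\<^bsub>A\<^esub> i ((\<alpha> ^^ d) r \<otimes>\<^bsub>R\<^esub> s)"
proof -
  have "(tm [^]\<^bsub>A\<^esub> b \<otimes>\<^bsub>A\<^esub> i r) \<otimes>\<^bsub>A\<^esub> (tm [^]\<^bsub>A\<^esub> d \<otimes>\<^bsub>A\<^esub> i s)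
     = tm [^]\<^bsub>A\<^esub> b \<otimes>\<^bsub>A\<^esub> (i r \<otimes>\<^bsub>A\<^esub> tm [^]\<^bsub>A\<^esub> d) \<otimes>\<^bsub>A\<^esub> i s"
    using r s tm by (simp add: A.m_assoc)
  also have "\<dots> = tm [^]\<^bsub>A\<^esub> b \<otimes>\<^bsub>A\<^esub> (tm [^]\<^bsub>A\<^esub> d \<otimes>\<^bsub>A\<^esub> i ((\<alpha> ^^ d) r)) \<otimes>\<^bsub>A\<^esub> i s"
    using r by (simp add: L1)
  also have "\<dots> = tm [^]\<^bsub>A\<^esub> (b + d) \<otimes>\<^bsub>A\<^esub> i ((\<alpha> ^^ d) r \<otimes>\<^bsub>R\<^esub> s)"
    using r s tm by (simp add: A.m_assoc imul A.nat_pow_mult[OF tm, symmetric])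
  finally show ?thesis .
qed

lemma M2: assumes r: "r \<in> carrier R" and s: "s \<in> carrier R"
  shows "(i r \<otimes>\<^bsub>A\<^esub> tp [^]\<^bsub>A\<^esub> (a::nat)) \<otimes>\<^bsub>A\<^esub> (i s \<otimes>\<^bsub>A\<^esub> tp [^]\<^bsub>A\<^esub> (c::nat))
   = i (r \<otimes>\<^bsub>R\<^esub> (\<alpha> ^^ a) s) \<otimes>\<^bsub>A\<^esub> tp [^]\<^bsub>A\<^esub> (a + c)"
proof -
  have "(i r \<otimes>\<^bsub>A\<^esub> tp [^]\<^bsub>A\<^esub> a) \<otimes>\<^bsub>A\<^esub> (i s \<otimes>\<^bsub>A\<^esub> tp [^]\<^bsub>A\<^esub> c)
     = i r \<otimes>\<^bsub>A\<^esub> (tp [^]\<^bsub>A\<^esub> a \<otimes>\<^bsub>A\<^esub> i s) \<otimes>\<^bsub>A\<^esub> tp [^]\<^bsub>A\<^esub> c"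
    using r s tp by (simp add: A.m_assoc)
  also have "\<dots> = i r \<otimes>\<^bsub>A\<^esub> (i ((\<alpha> ^^ a) s) \<otimes>\<^bsub>A\<^esub> tp [^]\<^bsub>A\<^esub> a) \<otimes>\<^bsub>A\<^esub> tp [^]\<^bsub>A\<^esub> c"
    using s by (simp add: L2)
  also have "\<dots> = i (r \<otimes>\<^bsub>R\<^esub> (\<alpha> ^^ a) s) \<otimes>\<^bsub>A\<^esub> tp [^]\<^bsub>A\<^esub> (a + c)"
    using r s tp by (simp add: A.m_assoc imul A.nat_pow_mult[OF tp, symmetric])
  finally show ?thesis .
qed

lemma M3a: assumes r: "r \<in> carrier R" and s: "s \<in> carrier R" and bc: "c \<le> b"
  shows "\<exists>t\<in>carrier R. (tm [^]\<^bsub>A\<^esub> (b::nat) \<otimes>\<^bsub>A\<^esub> i r) \<otimes>\<^bsub>A\<^esub> (i s \<otimes>\<^bsub>A\<^esub> tp [^]\<^bsub>A\<^esub> (c::nat))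
   = tm [^]\<^bsub>A\<^esub> (b - c) \<otimes>\<^bsub>A\<^esub> i t"
proof -
  obtain k0 where "b = c + k0" using le_Suc_ex[OF bc] by blast
  then obtain k where k: "b = k + c" by (simp add: add.commute)
  obtain t where t: "t \<in> carrier R" "tm [^]\<^bsub>A\<^esub> c \<otimes>\<^bsub>A\<^esub> i (r \<otimes>\<^bsub>R\<^esub> s) \<otimes>\<^bsub>A\<^esub> tp [^]\<^bsub>A\<^esub> c = i t"
    using K[of "r \<otimes>\<^bsub>R\<^esub> s" c] r s by blast
  have "(tm [^]\<^bsub>A\<^esub> b \<otimes>\<^bsub>A\<^esub> i r) \<otimes>\<^bsub>A\<^esub> (i s \<otimes>\<^bsub>A\<^esub> tp [^]\<^bsub>A\<^esub> c)
     = tm [^]\<^bsub>A\<^esub> k \<otimes>\<^bsub>A\<^esub> (tm [^]\<^bsub>A\<^esub> c \<otimes>\<^bsub>A\<^esub> i (r \<otimes>\<^bsub>R\<^esub> s) \<otimes>\<^bsub>A\<^esub> tp [^]\<^bsub>A\<^esub> c)"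
    using r s tm tp by (simp add: k A.m_assoc imul A.nat_pow_mult[OF tm, symmetric])
  also have "\<dots> = tm [^]\<^bsub>A\<^esub> (b - c) \<otimes>\<^bsub>A\<^esub> i t" using t k by simp
  finally show ?thesis using t by blast
qed

lemma M3b: assumes r: "r \<in> carrier R" and s: "s \<in> carrier R" and bc: "b \<le> c"
  shows "\<exists>t\<in>carrier R. (tm [^]\<^bsub>A\<^esub> (b::nat) \<otimes>\<^bsub>A\<^esub> i r) \<otimes>\<^bsub>A\<^esub> (i s \<otimes>\<^bsub>A\<^esub> tp [^]\<^bsub>A\<^esub> (c::nat))
   = i t \<otimes>\<^bsub>A\<^esub> tp [^]\<^bsub>A\<^esub> (c - b)"
proof -
  obtain k where k: "c = b + k" using le_Suc_ex[OF bc] by blast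
  obtain t where t: "t \<in> carrier R" "tm [^]\<^bsub>A\<^esub> b \<otimes>\<^bsub>A\<^esub> i (r \<otimes>\<^bsub>R\<^esub> s) \<otimes>\<^bsub>A\<^esub> tp [^]\<^bsub>A\<^esub> b = i t"
    using K[of "r \<otimes>\<^bsub>R\<^esub> s" b] r s by blast
  have "(tm [^]\<^bsub>A\<^esub> b \<otimes>\<^bsub>A\<^esub> i r) \<otimes>\<^bsub>A\<^esub> (i s \<otimes>\<^bsub>A\<^esub> tp [^]\<^bsub>A\<^esub> c)
     = (tm [^]\<^bsub>A\<^esub> b \<otimes>\<^bsub>A\<^esub> i (r \<otimes>\<^bsub>R\<^esub> s) \<otimes>\<^bsub>A\<^esub> tp [^]\<^bsub>A\<^esub> b) \<otimes>\<^bsub>A\<^esub> tp [^]\<^bsub>A\<^esub> k"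
    using r s tm tp by (simp add: k A.m_assoc imul A.nat_pow_mult[OF tp, symmetric])
  also have "\<dots> = i t \<otimes>\<^bsub>A\<^esub> tp [^]\<^bsub>A\<^esub> (c - b)" using t k by simp
  finally show ?thesis using t by blast
qed

lemma M4a: assumes r: "r \<in> carrier R" and s: "s \<in> carrier R" and ad: "d \<le> a"
  shows "\<exists>t\<in>carrier R. (i r \<otimes>\<^bsub>A\<^esub> tp [^]\<^bsub>A\<^esub> (a::nat)) \<otimes>\<^bsub>A\<^esub> (tm [^]\<^bsub>A\<^esub> (d::nat) \<otimes>\<^bsub>A\<^esub> i s)
   = i t \<otimes>\<^bsub>A\<^esub> tp [^]\<^bsub>A\<^esub> (a - d)"
proof -
  obtain k0 where "a = d + k0" using le_Suc_ex[OF ad] by blast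
  then obtain k where k: "a = k + d" by (simp add: add.commute)
  obtain f where f: "f \<in> carrier R" "tp [^]\<^bsub>A\<^esub> d \<otimes>\<^bsub>A\<^esub> tm [^]\<^bsub>A\<^esub> d = i f" using Pf by blast
  have "(i r \<otimes>\<^bsub>A\<^esub> tp [^]\<^bsub>A\<^esub> a) \<otimes>\<^bsub>A\<^esub> (tm [^]\<^bsub>A\<^esub> d \<otimes>\<^bsub>A\<^esub> i s)
     = i r \<otimes>\<^bsub>A\<^esub> tp [^]\<^bsub>A\<^esub> k \<otimes>\<^bsub>A\<^esub> (tp [^]\<^bsub>A\<^esub> d \<otimes>\<^bsub>A\<^esub> tm [^]\<^bsub>A\<^esub> d) \<otimes>\<^bsub>A\<^esub> i s"
    using r s tm tp by (simp add: k A.m_assoc A.nat_pow_mult[OF tp, symmetric])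
  also have "\<dots> = i r \<otimes>\<^bsub>A\<^esub> (tp [^]\<^bsub>A\<^esub> k \<otimes>\<^bsub>A\<^esub> i (f \<otimes>\<^bsub>R\<^esub> s))"
    using r s f tp by (simp add: A.m_assoc imul)
  also have "\<dots> = i r \<otimes>\<^bsub>A\<^esub> (i ((\<alpha> ^^ k) (f \<otimes>\<^bsub>R\<^esub> s)) \<otimes>\<^bsub>A\<^esub> tp [^]\<^bsub>A\<^esub> k)"
    using r s f by (simp only: L2 R.m_closed)
  also have "\<dots> = i (r \<otimes>\<^bsub>R\<^esub> (\<alpha> ^^ k) (f \<otimes>\<^bsub>R\<^esub> s)) \<otimes>\<^bsub>A\<^esub> tp [^]\<^bsub>A\<^esub> (a - d)"
    using r s f tp by (simp add: k A.m_assoc imul)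
  finally show ?thesis using r s f
    by (intro bexI[where x="r \<otimes>\<^bsub>R\<^esub> (\<alpha> ^^ k) (f \<otimes>\<^bsub>R\<^esub> s)"]) auto
qed

lemma M4b: assumes r: "r \<in> carrier R" and s: "s \<in> carrier R" and ad: "a \<le> d"
  shows "\<exists>t\<in>carrier R. (i r \<otimes>\<^bsub>A\<^esub> tp [^]\<^bsub>A\<^esub> (a::nat)) \<otimes>\<^bsub>A\<^esub> (tm [^]\<^bsub>A\<^esub> (d::nat) \<otimes>\<^bsub>A\<^esub> i s)
   = tm [^]\<^bsub>A\<^esub> (d - a) \<otimes>\<^bsub>A\<^esub> i t"
proof -
  obtain k where k: "d = a + k" using le_Suc_ex[OF ad] by blast
  obtain f where f: "f \<in> carrier R" "tp [^]\<^bsub>A\<^esub> a \<otimes>\<^bsub>A\<^esub> tm [^]\<^bsub>A\<^esub> a = i f" using Pf by blast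
  have "(i r \<otimes>\<^bsub>A\<^esub> tp [^]\<^bsub>A\<^esub> a) \<otimes>\<^bsub>A\<^esub> (tm [^]\<^bsub>A\<^esub> d \<otimes>\<^bsub>A\<^esub> i s)
     = i r \<otimes>\<^bsub>A\<^esub> (tp [^]\<^bsub>A\<^esub> a \<otimes>\<^bsub>A\<^esub> tm [^]\<^bsub>A\<^esub> a) \<otimes>\<^bsub>A\<^esub> tm [^]\<^bsub>A\<^esub> k \<otimes>\<^bsub>A\<^esub> i s"
    using r s tm tp by (simp add: k A.m_assoc A.nat_pow_mult[OF tm, symmetric])
  also have "\<dots> = i (r \<otimes>\<^bsub>R\<^esub> f) \<otimes>\<^bsub>A\<^esub> tm [^]\<^bsub>A\<^esub> k \<otimes>\<^bsub>A\<^esub> i s"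
    using r s f by (simp add: imul)
  also have "\<dots> = tm [^]\<^bsub>A\<^esub> k \<otimes>\<^bsub>A\<^esub> i ((\<alpha> ^^ k) (r \<otimes>\<^bsub>R\<^esub> f)) \<otimes>\<^bsub>A\<^esub> i s"
    using r s f by (simp only: L1 R.m_closed)
  also have "\<dots> = tm [^]\<^bsub>A\<^esub> (d - a) \<otimes>\<^bsub>A\<^esub> i ((\<alpha> ^^ k) (r \<otimes>\<^bsub>R\<^esub> f) \<otimes>\<^bsub>R\<^esub> s)"
    using r s f tm by (simp add: k A.m_assoc imul del: funpow.simps)
  finally show ?thesis using r s f
    by (intro bexI[where x="(\<alpha> ^^ k) (r \<otimes>\<^bsub>R\<^esub> f) \<otimes>\<^bsub>R\<^esub> s"]) auto
qed


end



declare pow_nat[simp del]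

context cs begin

definition gr :: "int \<Rightarrow> 'a \<Rightarrow> 'b" where
  "gr k r = (if 0 \<le> k then tm [^]\<^bsub>A\<^esub> nat k \<otimes>\<^bsub>A\<^esub> i r else i r \<otimes>\<^bsub>A\<^esub> tp [^]\<^bsub>A\<^esub> nat (- k))"

lemma gr_pos: "0 \<le> k \<Longrightarrow> gr k r = tm [^]\<^bsub>A\<^esub> nat k \<otimes>\<^bsub>A\<^esub> i r"
  by (simp add: gr_def)

lemma gr_neg: "k \<le> 0 \<Longrightarrow> r \<in> carrier R \<Longrightarrow> gr k r = i r \<otimes>\<^bsub>A\<^esub> tp [^]\<^bsub>A\<^esub> nat (- k)"
  by (cases "k = 0") (auto simp: gr_def)

lemma gr_car: "r \<in> carrier R \<Longrightarrow> gr k r \<in> carrier A"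
  using tm tp by (simp add: gr_def)

lemma G_eq: "cs_grade R A i tp tm k = gr k ` carrier R"
proof -
  consider "k = 0" | "k < 0" | "k > 0" by linarith
  then show ?thesis
  proof cases
    case 1 then show ?thesis by (auto simp: cs_grade_def gr_def)
  next
    case 2 then show ?thesis by (auto simp: cs_grade_def gr_def)
  next
    case 3 then show ?thesis by (auto simp: cs_grade_def gr_def)
  qed
qed

lemma G_car: "gr k ` carrier R \<subseteq> carrier A"
  using gr_car by auto

lemma gr_add: "r \<in> carrier R \<Longrightarrow> s \<in> carrier R \<Longrightarrow> gr k r \<oplus>\<^bsub>A\<^esub> gr k s = gr k (r \<oplus>\<^bsub>R\<^esub> s)"
  using tm tp by (simp add: gr_def iadd A.r_distr A.l_distr)

lemma gr_zero: "gr k \<zero>\<^bsub>R\<^esub> = \<zero>\<^bsub>A\<^esub>"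
  using tm tp by (simp add: gr_def izero)

lemma gr_negt: "r \<in> carrier R \<Longrightarrow> gr k (\<ominus>\<^bsub>R\<^esub> r) = \<ominus>\<^bsub>A\<^esub> gr k r"
  using tm tp by (simp add: gr_def ineg A.r_minus A.l_minus)

lemma G_sub: "additive_subgroup (gr k ` carrier R) A"
proof (rule A.add_subgroupI')
  show "gr k ` carrier R \<subseteq> carrier A" by (rule G_car)
  show "\<zero>\<^bsub>A\<^esub> \<in> gr k ` carrier R" using gr_zero[symmetric] by blast
next
  fix x y assume "x \<in> gr k ` carrier R" "y \<in> gr k ` carrier R"
  then show "x \<oplus>\<^bsub>A\<^esub> y \<in> gr k ` carrier R" using gr_add by auto
next
  fix x assume "x \<in> gr k ` carrier R"
  then obtain r where r: "r \<in> carrier R" "x = gr k r" by blast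
  then show "\<ominus>\<^bsub>A\<^esub> x \<in> gr k ` carrier R" by (metis gr_negt R.a_inv_closed imageI)
qed

lemma gr_mul:
  assumes r: "r \<in> carrier R" and s: "s \<in> carrier R"
  shows "\<exists>t\<in>carrier R. gr m r \<otimes>\<^bsub>A\<^esub> gr n s = gr (m + n) t"
proof (cases "0 \<le> m")
  case m: True
  show ?thesis
  proof (cases "0 \<le> n")
    case n: True
    have "nat (m + n) = nat m + nat n" using m n by simp
    then show ?thesis using m n M1[OF r s, of "nat m" "nat n"] r s
      by (intro bexI[where x="(\<alpha> ^^ nat n) r \<otimes>\<^bsub>R\<^esub> s"]) (auto simp: gr_pos)
  next
    case n: False
    show ?thesis
    proof (cases "nat (- n) \<le> nat m")
      case True
      then obtain t where t: "t \<in> carrier R" "gr m r \<otimes>\<^bsub>A\<^esub> gr n s = tm [^]\<^bsub>A\<^esub> (nat m - nat (- n)) \<otimes>\<^bsub>A\<^esub> i t"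
        using M3a[OF r s True] m n r s by (auto simp: gr_pos gr_neg)
      have "nat m - nat (- n) = nat (m + n)" "0 \<le> m + n" using True m n by auto
      then show ?thesis using t by (auto simp: gr_pos)
    next
      case False
      then have F: "nat m \<le> nat (- n)" by simp
      then obtain t where t: "t \<in> carrier R" "gr m r \<otimes>\<^bsub>A\<^esub> gr n s = i t \<otimes>\<^bsub>A\<^esub> tp [^]\<^bsub>A\<^esub> (nat (- n) - nat m)"
        using M3b[OF r s F] m n r s by (auto simp: gr_pos gr_neg)
      have "nat (- n) - nat m = nat (- (m + n))" "m + n \<le> 0" using F m n by auto
      then show ?thesis using t by (auto simp: gr_neg)
    qed
  qed
next
  case m: False
  show ?thesis
  proof (cases "0 \<le> n")
    case n: True
    show ?thesis
    proof (cases "nat n \<le> nat (- m)")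
      case True
      then obtain t where t: "t \<in> carrier R" "gr m r \<otimes>\<^bsub>A\<^esub> gr n s = i t \<otimes>\<^bsub>A\<^esub> tp [^]\<^bsub>A\<^esub> (nat (- m) - nat n)"
        using M4a[OF r s True] m n r s by (auto simp: gr_pos gr_neg)
      have "nat (- m) - nat n = nat (- (m + n))" "m + n \<le> 0" using True m n by auto
      then show ?thesis using t by (auto simp: gr_neg)
    next
      case False
      then have F: "nat (- m) \<le> nat n" by simp
      then obtain t where t: "t \<in> carrier R" "gr m r \<otimes>\<^bsub>A\<^esub> gr n s = tm [^]\<^bsub>A\<^esub> (nat n - nat (- m)) \<otimes>\<^bsub>A\<^esub> i t"
        using M4b[OF r s F] m n r s by (auto simp: gr_pos gr_neg)
      have "nat n - nat (- m) = nat (m + n)" "0 \<le> m + n" using F m n by auto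
      then show ?thesis using t by (auto simp: gr_pos)
    qed
  next
    case n: False
    have "nat (- (m + n)) = nat (- m) + nat (- n)" using m n by simp
    then show ?thesis using m n M2[OF r s, of "nat (- m)" "nat (- n)"] r s
      by (intro bexI[where x="r \<otimes>\<^bsub>R\<^esub> (\<alpha> ^^ nat (- m)) s"]) (auto simp: gr_neg)
  qed
qed

abbreviation "PG m n \<equiv> {x \<otimes>\<^bsub>A\<^esub> y | x y. x \<in> gr m ` carrier R \<and> y \<in> gr n ` carrier R}"

lemma PG_car: "PG m n \<subseteq> carrier A"
  using G_car by blast

lemma one_span: "\<one>\<^bsub>A\<^esub> \<in> add_span A (PG m (- m))"
proof (cases "0 \<le> m")
  case True
  have "gr m \<one>\<^bsub>R\<^esub> \<otimes>\<^bsub>A\<^esub> gr (- m) \<one>\<^bsub>R\<^esub> = \<one>\<^bsub>A\<^esub>"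
    using True tm tp by (simp add: gr_pos gr_neg ione L3)
  moreover have "gr m \<one>\<^bsub>R\<^esub> \<in> gr m ` carrier R" "gr (- m) \<one>\<^bsub>R\<^esub> \<in> gr (- m) ` carrier R" by auto
  ultimately have "\<one>\<^bsub>A\<^esub> \<in> PG m (- m)"
    by (intro CollectI exI[of _ "gr m \<one>\<^bsub>R\<^esub>"] exI[of _ "gr (- m) \<one>\<^bsub>R\<^esub>"]) simp
  then show ?thesis using span_incl[OF PG_car A.ring_axioms] by blast
next
  case False
  obtain f where f: "f \<in> carrier R" "tp [^]\<^bsub>A\<^esub> nat (- m) \<otimes>\<^bsub>A\<^esub> tm [^]\<^bsub>A\<^esub> nat (- m) = i f"
    "\<one>\<^bsub>R\<^esub> \<in> Jset R f" using Pf by blast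
  have sub: "additive_subgroup (add_span A (PG m (- m))) A"
    by (rule span_sub[OF A.ring_axioms PG_car])
  have "i \<one>\<^bsub>R\<^esub> \<in> add_span A (PG m (- m))"
    using R.ring_axioms gens_car[OF f(1)] f(3)[unfolded Jset_def]
  proof (rule span_induct)
    fix u assume "u \<in> {x \<otimes>\<^bsub>R\<^esub> f \<otimes>\<^bsub>R\<^esub> y | x y. x \<in> carrier R \<and> y \<in> carrier R}"
    then obtain x y where u: "u = x \<otimes>\<^bsub>R\<^esub> f \<otimes>\<^bsub>R\<^esub> y" "x \<in> carrier R" "y \<in> carrier R" by blast
    have "i u = (i x \<otimes>\<^bsub>A\<^esub> tp [^]\<^bsub>A\<^esub> nat (- m)) \<otimes>\<^bsub>A\<^esub> (tm [^]\<^bsub>A\<^esub> nat (- m) \<otimes>\<^bsub>A\<^esub> i y)"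
      using u f(1) tm tp by (simp add: imul A.m_assoc f(2)[symmetric])
    also have "\<dots> = gr m x \<otimes>\<^bsub>A\<^esub> gr (- m) y" using False u by (simp add: gr_pos gr_neg)
    finally have "i u \<in> PG m (- m)" using u by blast
    then show "i u \<in> add_span A (PG m (- m))" using span_incl[OF PG_car A.ring_axioms] by blast
  next
    show "i \<zero>\<^bsub>R\<^esub> \<in> add_span A (PG m (- m))" using izero additive_subgroup.zero_closed[OF sub] by simp
  next
    fix u v assume "u \<in> carrier R" "v \<in> carrier R" "i u \<in> add_span A (PG m (- m))" "i v \<in> add_span A (PG m (- m))"
    then show "i (u \<oplus>\<^bsub>R\<^esub> v) \<in> add_span A (PG m (- m))" using iadd additive_subgroup.a_closed[OF sub] by simp
  next
    fix u assume "u \<in> carrier R" "i u \<in> add_span A (PG m (- m))"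
    then show "i (\<ominus>\<^bsub>R\<^esub> u) \<in> add_span A (PG m (- m))" using ineg additive_subgroup.a_inv_closed[OF sub] by simp
  qed
  then show ?thesis by (simp add: ione)
qed

lemma main_sup:
  assumes x: "x \<in> gr (m + n) ` carrier R"
  shows "x \<in> add_span A (PG m n)"
proof -
  have xc: "x \<in> carrier A" using x G_car by blast
  have sub: "additive_subgroup (add_span A (PG m n)) A"
    by (rule span_sub[OF A.ring_axioms PG_car])
  have "\<one>\<^bsub>A\<^esub> \<otimes>\<^bsub>A\<^esub> x \<in> add_span A (PG m n)"
    using A.ring_axioms PG_car one_span
  proof (rule span_induct)
    fix y assume "y \<in> PG m (- m)"
    then obtain u v where y: "y = gr m u \<otimes>\<^bsub>A\<^esub> gr (- m) v" "u \<in> carrier R" "v \<in> carrier R" by blast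
    obtain w where w: "w \<in> carrier R" "x = gr (m + n) w" using x by blast
    obtain t where t: "t \<in> carrier R" "gr (- m) v \<otimes>\<^bsub>A\<^esub> gr (m + n) w = gr (- m + (m + n)) t"
      using gr_mul[OF y(3) w(1)] by blast
    have "y \<otimes>\<^bsub>A\<^esub> x = gr m u \<otimes>\<^bsub>A\<^esub> gr n t"
      using y w t gr_car by (simp add: A.m_assoc)
    then have "y \<otimes>\<^bsub>A\<^esub> x \<in> PG m n" using y t by blast
    then show "y \<otimes>\<^bsub>A\<^esub> x \<in> add_span A (PG m n)" using span_incl[OF PG_car A.ring_axioms] by blast
  next
    show "\<zero>\<^bsub>A\<^esub> \<otimes>\<^bsub>A\<^esub> x \<in> add_span A (PG m n)" using xc additive_subgroup.zero_closed[OF sub] by simp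
  next
    fix u v assume "u \<in> carrier A" "v \<in> carrier A" "u \<otimes>\<^bsub>A\<^esub> x \<in> add_span A (PG m n)" "v \<otimes>\<^bsub>A\<^esub> x \<in> add_span A (PG m n)"
    then show "(u \<oplus>\<^bsub>A\<^esub> v) \<otimes>\<^bsub>A\<^esub> x \<in> add_span A (PG m n)"
      using xc additive_subgroup.a_closed[OF sub] by (simp add: A.l_distr)
  next
    fix u assume "u \<in> carrier A" "u \<otimes>\<^bsub>A\<^esub> x \<in> add_span A (PG m n)"
    then show "(\<ominus>\<^bsub>A\<^esub> u) \<otimes>\<^bsub>A\<^esub> x \<in> add_span A (PG m n)"
      using xc additive_subgroup.a_inv_closed[OF sub] by (simp add: A.l_minus)
  qed
  then show ?thesis using xc by simp
qed

lemma strong: "strongly_graded A (cs_grade R A i tp tm)"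
  unfolding strongly_graded_def set_prod_def G_eq
proof (intro allI equalityI)
  fix m n
  show "add_span A (PG m n) \<subseteq> gr (m + n) ` carrier R"
  proof (rule span_min[OF G_sub])
    show "PG m n \<subseteq> gr (m + n) ` carrier R"
      using gr_mul by blast
  qed
  show "gr (m + n) ` carrier R \<subseteq> add_span A (PG m n)"
    using main_sup by blast
qed

end



lemma full_conv:
  fixes R (structure)
  assumes R: "ring R" and e: "e \<in> carrier R"
    and fe: "set_prod R (set_prod R (carrier R) {e}) (carrier R) = carrier R"
  shows "\<one>\<^bsub>R\<^esub> \<in> add_span R {x \<otimes>\<^bsub>R\<^esub> e \<otimes>\<^bsub>R\<^esub> y | x y. x \<in> carrier R \<and> y \<in> carrier R}"
proof -
  interpret ring R by fact
  define G where "G = {x \<otimes>\<^bsub>R\<^esub> e \<otimes>\<^bsub>R\<^esub> y | x y. x \<in> carrier R \<and> y \<in> carrier R}"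
  have Gc: "G \<subseteq> carrier R" using e by (auto simp: G_def)
  have sub: "additive_subgroup (add_span R G) R" by (rule span_sub[OF R Gc])
  have G1c: "{x \<otimes> y | x y. x \<in> carrier R \<and> y \<in> {e}} \<subseteq> carrier R" using e by auto
  have inner: "\<forall>y\<in>carrier R. p \<otimes> y \<in> add_span R G" if p: "p \<in> set_prod R (carrier R) {e}" for p
    using R G1c p[unfolded set_prod_def]
  proof (rule span_induct)
    fix s assume "s \<in> {x \<otimes> y | x y. x \<in> carrier R \<and> y \<in> {e}}"
    then obtain x where x: "x \<in> carrier R" "s = x \<otimes> e" by blast
    show "\<forall>y\<in>carrier R. s \<otimes> y \<in> add_span R G"
      using x span_incl[OF Gc R] by (auto simp: G_def)
  next
    show "\<forall>y\<in>carrier R. \<zero> \<otimes> y \<in> add_span R G" using additive_subgroup.zero_closed[OF sub] by simp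
  next
    fix u v assume "u \<in> carrier R" "v \<in> carrier R" "\<forall>y\<in>carrier R. u \<otimes> y \<in> add_span R G"
      "\<forall>y\<in>carrier R. v \<otimes> y \<in> add_span R G"
    then show "\<forall>y\<in>carrier R. (u \<oplus> v) \<otimes> y \<in> add_span R G"
      using additive_subgroup.a_closed[OF sub] by (simp add: l_distr)
  next
    fix u assume "u \<in> carrier R" "\<forall>y\<in>carrier R. u \<otimes> y \<in> add_span R G"
    then show "\<forall>y\<in>carrier R. (\<ominus> u) \<otimes> y \<in> add_span R G"
      using additive_subgroup.a_inv_closed[OF sub] by (simp add: l_minus)
  qed
  have "set_prod R (set_prod R (carrier R) {e}) (carrier R) \<subseteq> add_span R G"
    unfolding set_prod_def[of R "set_prod R (carrier R) {e}"]
    by (rule span_min[OF sub]) (use inner in blast)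
  then show ?thesis using fe by (auto simp: G_def)
qed

theorem mainTheorem7:
  fixes R :: "'a ring" and e :: 'a and \<alpha> :: "'a \<Rightarrow> 'a"
    and A :: "'b ring" and i :: "'a \<Rightarrow> 'b" and tp tm :: 'b
  assumes "ring R"
    and "idempotent_elem R e"
    and "\<alpha> \<in> ring_iso R (corner R e)"
    and "is_corner_skew_Laurent R e \<alpha> A i tp tm"
    and "full_idempotent R e"
  shows "strongly_graded A (cs_grade R A i tp tm)"
proof -
  have e: "e \<in> carrier R" "e \<otimes>\<^bsub>R\<^esub> e = e" using assms(2) by (auto simp: idempotent_elem_def)
  have rels: "corner_skew_rels R e \<alpha> A i tp tm" using assms(4) by (simp add: is_corner_skew_Laurent_def)
  have iso: "\<alpha> \<in> ring_hom R (corner R e)" "\<alpha> ` carrier R = carrier (corner R e)"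
    using assms(3) by (auto simp: ring_iso_def bij_betw_def)
  have full: "\<one>\<^bsub>R\<^esub> \<in> add_span R {x \<otimes>\<^bsub>R\<^esub> e \<otimes>\<^bsub>R\<^esub> y | x y. x \<in> carrier R \<and> y \<in> carrier R}"
    using full_conv[OF assms(1) e(1)] assms(5) by (simp add: full_idempotent_def)
  interpret cs R A e \<alpha> i tp tm
    apply (rule cs.intro)
    apply (rule assms(1))
    using rels apply (simp add: corner_skew_rels_def)
    apply (rule cs_axioms.intro)
    using e iso full rels by (auto simp: corner_skew_rels_def)
  show ?thesis by (rule strong)
qed



end
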